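(* Let $p\ge2$ be an integer, $\mathcal{F}$ the infinite rooted tree with root $\delta$ in which every vertex has exactly $p$ children, and let $a,b$ be integral weight functions on $\mathcal{F}$ with weights $\omega_a,\omega_b$ respectively. Then $$\langle a,b\rangle\ \ge\ \sum_{i=0}^{\infty}p^i\,\widehat\gamma_i(\omega_a)\,\widehat\gamma_i(\omega_b).$$
   Context: An integral weight function with weight $\omega$ (a nonnegative integer) is a map $a:V(\mathcal{F})\to\mathbb{Z}_{\ge0}$ such that (1) for every infinite path $T$ starting at the root, $\sum_{v\in T}a(v)\ge\omega$; (2) for every vertex $v$, $a(v)\ge\sum_{u\in N_v}a(u)$, where $N_v$ is the set of children of $v$. The scalar product is $\langle a,b\rangle=\sum_{v}a(v)b(v)\in[0,\infty]$. An integral resolution of $\omega$ is a sequence $(\gamma_i)_{i\ge0}$ of nonnegative integers with $\gamma_i\ge p\gamma_{i+1}$ and $\sum_i\gamma_i=\omega$; $(\widehat\gamma_i(\omega))_{i\ge0}$ denotes the lexicographically smallest one. *)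

theory Defs
  imports "HOL-Analysis.Analysis"
begin

text \<open>The p-ary rooted tree F: vertices are finite lists over {0..<p};
  the root delta is the empty list, the children of v are the lists x # v with x < p.\<close>

definition tree_vertices :: "nat \<Rightarrow> nat list set" where
  "tree_vertices p = {v. \<forall>x\<in>set v. x < p}"

definition tree_children :: "nat \<Rightarrow> nat list \<Rightarrow> nat list set" where
  "tree_children p v = {x # v | x. x < p}"

definition root_path :: "nat \<Rightarrow> (nat \<Rightarrow> nat list) \<Rightarrow> bool" where
  "root_path p T \<longleftrightarrow> T 0 = [] \<and> (\<forall>n. T (Suc n) \<in> tree_children p (T n))"

definition integral_weight_function :: "nat \<Rightarrow> nat \<Rightarrow> (nat list \<Rightarrow> nat) \<Rightarrow> bool" where
  "integral_weight_function p \<omega> a \<longleftrightarrow>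
     (\<forall>T. root_path p T \<longrightarrow> (\<Sum>n. (of_nat (a (T n)) :: ennreal)) \<ge> of_nat \<omega>) \<and>
     (\<forall>v\<in>tree_vertices p. a v \<ge> (\<Sum>u\<in>tree_children p v. a u))"

definition scalar_prod :: "nat \<Rightarrow> (nat list \<Rightarrow> nat) \<Rightarrow> (nat list \<Rightarrow> nat) \<Rightarrow> ennreal" where
  "scalar_prod p a b = (\<Sum>\<^sub>\<infinity>v\<in>tree_vertices p. (of_nat (a v * b v) :: ennreal))"

definition integral_resolution :: "nat \<Rightarrow> nat \<Rightarrow> (nat \<Rightarrow> nat) \<Rightarrow> bool" where
  "integral_resolution p \<omega> \<gamma> \<longleftrightarrow>
     (\<forall>i. \<gamma> i \<ge> p * \<gamma> (Suc i)) \<and> (\<Sum>i. (of_nat (\<gamma> i) :: ennreal)) = of_nat \<omega>"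

definition lex_less :: "(nat \<Rightarrow> nat) \<Rightarrow> (nat \<Rightarrow> nat) \<Rightarrow> bool" where
  "lex_less \<gamma> \<delta> \<longleftrightarrow> (\<exists>k. (\<forall>i<k. \<gamma> i = \<delta> i) \<and> \<gamma> k < \<delta> k)"

definition min_resolution :: "nat \<Rightarrow> nat \<Rightarrow> nat \<Rightarrow> nat" where
  "min_resolution p \<omega> = (THE \<gamma>. integral_resolution p \<omega> \<gamma> \<and>
      (\<forall>\<delta>. integral_resolution p \<omega> \<delta> \<longrightarrow> \<gamma> = \<delta> \<or> lex_less \<gamma> \<delta>))"

end

theory Submission
  imports Defs
begin


function S :: "nat \<Rightarrow> nat \<Rightarrow> nat" where
  "S p c = (if c = 0 \<or> p < 2 then 0 else c + S p (c div p))"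
  by auto
termination by (relation "Wellfounded.measure snd") auto

declare S.simps[simp del]

lemma S0[simp]: "S p 0 = 0" by (simp add: S.simps)

lemma S_step: "p \<ge> 2 \<Longrightarrow> S p c = c + S p (c div p)"
  by (cases "c = 0") (simp_all add: S.simps)

lemma S_mono: assumes "p \<ge> 2" shows "c \<le> c' \<Longrightarrow> S p c \<le> S p c'"
proof (induction c' arbitrary: c rule: less_induct)
  case (less c')
  show ?case
  proof (cases "c = 0")
    case True then show ?thesis by simp
  next
    case False
    then have "c' > 0" using less by simp
    then have "c' div p < c'" using assms by simp
    moreover have "c div p \<le> c' div p" using less by (simp add: div_le_mono)
    ultimately have "S p (c div p) \<le> S p (c' div p)" using less by blast
    then show ?thesis using S_step[OF assms, of c] S_step[OF assms, of c'] less by simp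
  qed
qed

lemma S_ge: "p \<ge> 2 \<Longrightarrow> c \<le> S p c"
  using S_step[of p c] by simp

lemma S_Suc: assumes "p \<ge> 2" shows "S p c + 1 \<le> S p (Suc c)"
proof -
  have "S p (c div p) \<le> S p (Suc c div p)" using S_mono[OF assms] by (simp add: div_le_mono)
  then show ?thesis using S_step[OF assms, of c] S_step[OF assms, of "Suc c"] by simp
qed

definition m :: "nat \<Rightarrow> nat \<Rightarrow> nat" where "m p w = (LEAST c. w \<le> S p c)"

lemma m_spec: "p \<ge> 2 \<Longrightarrow> w \<le> S p (m p w)"
  unfolding m_def by (rule LeastI[of _ w]) (rule S_ge)

lemma m_le: "w \<le> S p c \<Longrightarrow> m p w \<le> c"
  unfolding m_def by (rule Least_le)

lemma m_le_w: "p \<ge> 2 \<Longrightarrow> m p w \<le> w"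
  by (rule m_le, rule S_ge)

lemma m0[simp]: "m p 0 = 0"
  using m_le[of 0 p 0] by simp

lemma m_pos: "p \<ge> 2 \<Longrightarrow> w > 0 \<Longrightarrow> m p w > 0"
  using m_spec[of p w] by (cases "m p w") auto

lemma m_mono: "p \<ge> 2 \<Longrightarrow> v \<le> w \<Longrightarrow> m p v \<le> m p w"
  using m_spec[of p w] by (intro m_le) simp

lemma m_Suc: assumes "p \<ge> 2" shows "m p (Suc w) \<le> Suc (m p w)"
  using m_spec[OF assms, of w] S_Suc[OF assms, of "m p w"] by (intro m_le) simp

lemma m_tail: assumes "p \<ge> 2" "m p w \<le> d" shows "p * m p (w - d) \<le> d"
proof -
  have "w \<le> S p d" using m_spec[OF assms(1), of w] S_mono[OF assms(1) assms(2)] by simp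
  then have "w - d \<le> S p (d div p)" using S_step[OF assms(1), of d] by simp
  then have "m p (w - d) \<le> d div p" by (rule m_le)
  then have "p * m p (w - d) \<le> p * (d div p)" by simp
  also have "\<dots> \<le> d" by simp
  finally show ?thesis .
qed

primrec g :: "nat \<Rightarrow> nat \<Rightarrow> nat \<Rightarrow> nat" where
  "g p w 0 = m p w"
| "g p w (Suc i) = g p (w - m p w) i"

function h :: "nat \<Rightarrow> nat \<Rightarrow> nat \<Rightarrow> nat" where
  "h p A B = (if p < 2 \<or> A = 0 \<or> B = 0 then 0 else m p A * m p B + p * h p (A - m p A) (B - m p B))"
  by auto
termination by (relation "Wellfounded.measure (\<lambda>(p,A,B). A)") (auto, metis diff_less m_pos not_less)

declare h.simps[simp del]

lemma h0[simp]: "h p 0 B = 0" "h p A 0 = 0" by (simp_all add: h.simps)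

lemma h_step: "p \<ge> 2 \<Longrightarrow> A > 0 \<Longrightarrow> B > 0 \<Longrightarrow> h p A B = m p A * m p B + p * h p (A - m p A) (B - m p B)"
  by (subst h.simps) simp

lemma h_sym: assumes "p \<ge> 2" shows "h p A B = h p B A"
proof (induction A arbitrary: B rule: less_induct)
  case (less A)
  show ?case
  proof (cases "A = 0 \<or> B = 0")
    case True then show ?thesis by auto
  next
    case False
    then have "A - m p A < A" using m_pos[OF assms, of A] by simp
    then have "h p (A - m p A) (B - m p B) = h p (B - m p B) (A - m p A)" using less by blast
    then show ?thesis using False h_step[OF assms, of A B] h_step[OF assms, of B A] by simp
  qed
qed

lemma lemM: assumes "p \<ge> 2" shows "X \<ge> 1 \<Longrightarrow> h p X Y \<le> h p (X - 1) Y + m p Y"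
proof (induction X arbitrary: Y rule: less_induct)
  case (less X)
  show ?case
  proof (cases "Y = 0")
    case True then show ?thesis by simp
  next
    case Y: False
    define u where "u = m p X"
    define Y' where "Y' = Y - m p Y"
    have u1: "u \<ge> 1" using m_pos[OF assms, of X] less.prems unfolding u_def by simp
    have hX: "h p X Y = u * m p Y + p * h p (X - u) Y'"
      using h_step[OF assms, of X Y] less.prems Y unfolding u_def Y'_def by simp
    have mm: "m p (X - 1) \<le> u" "u \<le> Suc (m p (X - 1))"
      using m_mono[OF assms, of "X - 1" X] m_Suc[OF assms, of "X - 1"] less.prems unfolding u_def by auto
    have pY': "p * m p Y' \<le> m p Y" unfolding Y'_def by (rule m_tail[OF assms]) simp
    show ?thesis
    proof (cases "m p (X - 1) = u")
      case False
      then have e: "m p (X - 1) = u - 1" using mm by simp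
      show ?thesis
      proof (cases "X = 1")
        case True
        then have "u = 1" using u1 m_le_w[OF assms, of X] unfolding u_def by simp
        then show ?thesis using hX True by simp
      next
        case False
        then have "h p (X - 1) Y = (u - 1) * m p Y + p * h p (X - 1 - (u - 1)) Y'"
          using h_step[OF assms, of "X - 1" Y] less.prems Y e unfolding Y'_def by simp
        moreover have "X - 1 - (u - 1) = X - u" using u1 by simp
        moreover have "(u - 1) * m p Y + m p Y = u * m p Y" using u1
          by (metis Suc_diff_1 add.commute less_le_trans mult_Suc zero_less_one)
        ultimately show ?thesis using hX by simp
      qed
    next
      case True
      have X1: "X - 1 > 0" using True u1 by (cases "X - 1 = 0") auto
      have h1: "h p (X - 1) Y = u * m p Y + p * h p (X - 1 - u) Y'"
        using h_step[OF assms, of "X - 1" Y] X1 Y True unfolding Y'_def by simp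
      have "p * h p (X - u) Y' \<le> p * h p (X - 1 - u) Y' + m p Y"
      proof (cases "X - u = 0")
        case True then show ?thesis by simp
      next
        case False
        then have "h p (X - u) Y' \<le> h p (X - u - 1) Y' + m p Y'"
          using less.IH[of "X - u" Y'] u1 by simp
        then have "p * h p (X - u) Y' \<le> p * h p (X - u - 1) Y' + p * m p Y'"
          by (metis add_mult_distrib2 mult_le_mono2)
        then show ?thesis using pY' by simp
      qed
      then show ?thesis using hX h1 by simp
    qed
  qed
qed



lemma lemM': assumes "p \<ge> 2" "Y \<ge> 1" shows "h p X Y \<le> h p X (Y - 1) + m p X"
  using lemM[OF assms(1) assms(2), of X] h_sym[OF assms(1)] by simp

lemma step_c: assumes "p \<ge> 2" "m p B \<le> d"
  shows "c*d + p*h p (A-c) (B-d) \<le> Suc c*d + p*h p (A - Suc c) (B-d)"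
proof (cases "A \<le> c")
  case True then show ?thesis by simp
next
  case False
  have "h p (A-c) (B-d) \<le> h p (A-c-1) (B-d) + m p (B - d)"
    using lemM[OF assms(1), of "A-c" "B-d"] False by simp
  then have "p*h p (A-c) (B-d) \<le> p*h p (A-c-1) (B-d) + p*m p (B - d)"
    by (metis add_mult_distrib2 mult_le_mono2)
  moreover have "p*m p (B - d) \<le> d" by (rule m_tail[OF assms])
  moreover have "A - c - 1 = A - Suc c" by simp
  ultimately show ?thesis by simp
qed

lemma step_d: assumes "p \<ge> 2" "m p A \<le> c"
  shows "c*d + p*h p (A-c) (B-d) \<le> c * Suc d + p*h p (A - c) (B - Suc d)"
  using step_c[OF assms, of d B] h_sym[OF assms(1)] by (simp add: mult.commute)

lemma lemI: assumes "p \<ge> 2" "m p A \<le> c" "m p B \<le> d"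
  shows "h p A B \<le> c*d + p*h p (A - c) (B - d)"
proof (cases "A = 0 \<or> B = 0")
  case True then show ?thesis by auto
next
  case False
  have m1: "mono (\<lambda>c. c*d + p*h p (A-c) (B-d))"
    by (rule monoI, rule lift_Suc_mono_le[of "\<lambda>c. c*d + p*h p (A-c) (B-d)"])
       (use step_c[OF assms(1) assms(3)] in auto)
  have m2: "mono (\<lambda>d. m p A*d + p*h p (A-m p A) (B-d))"
    by (rule monoI, rule lift_Suc_mono_le[of "\<lambda>d. m p A*d + p*h p (A-m p A) (B-d)"])
       (use step_d[OF assms(1), of A "m p A"] in auto)
  have "h p A B = m p A * m p B + p*h p (A - m p A) (B - m p B)"
    using h_step[OF assms(1)] False by simp
  also have "\<dots> \<le> m p A * d + p*h p (A - m p A) (B - d)" using monoD[OF m2 assms(3)] by simp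
  also have "\<dots> \<le> c * d + p*h p (A - c) (B - d)" using monoD[OF m1 assms(2)] by simp
  finally show ?thesis .
qed



lemma suminf_head_ennreal: "(\<Sum>n. f n :: ennreal) = f 0 + (\<Sum>n. f (Suc n))"
  using suminf_offset[of f 1, OF summableI] by (simp add: add.commute)

lemma partial_bound: assumes "p \<ge> 2" "\<And>n. p * \<delta> (Suc n) \<le> \<delta> n"
  shows "(\<Sum>i<n. \<delta> (k+i)) \<le> S p (\<delta> k)"
proof (induction n arbitrary: k)
  case 0 then show ?case by simp
next
  case (Suc n)
  have "(\<Sum>i<Suc n. \<delta> (k+i)) = \<delta> k + (\<Sum>i<n. \<delta> (Suc k+i))"
    by (subst sum.lessThan_Suc_shift) simp
  also have "\<dots> \<le> \<delta> k + S p (\<delta> (Suc k))" using Suc[of "Suc k"] by simp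
  also have "\<dots> \<le> \<delta> k + S p (\<delta> k div p)"
  proof -
    have "\<delta> (Suc k) = p * \<delta> (Suc k) div p" using assms(1) by simp
    also have "\<dots> \<le> \<delta> k div p" using assms(2) by (rule div_le_mono)
    finally show ?thesis using S_mono[OF assms(1)] by simp
  qed
  also have "\<dots> = S p (\<delta> k)" by (rule S_step[OF assms(1), symmetric])
  finally show ?case .
qed

lemma seq_bound: assumes "p \<ge> 2" "\<And>n. p * \<delta> (Suc n) \<le> \<delta> n"
  shows "(\<Sum>n. of_nat (\<delta> n) :: ennreal) \<le> of_nat (S p (\<delta> 0))"
proof (rule suminf_le_const[OF summableI])
  fix n
  have "(\<Sum>i<n. \<delta> (0+i)) \<le> S p (\<delta> 0)" by (rule partial_bound[where \<delta>=\<delta> and n=n and k=0, OF assms])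
  then show "(\<Sum>i<n. of_nat (\<delta> i) :: ennreal) \<le> of_nat (S p (\<delta> 0))"
    by (simp flip: of_nat_sum)
qed

lemma g_zero[simp]: "g p 0 i = 0"
  by (induction i) simp_all

lemma g_res: assumes "p \<ge> 2" shows "p * g p w (Suc i) \<le> g p w i"
proof (induction i arbitrary: w)
  case 0 then show ?case using m_tail[OF assms, of w "m p w"] by simp
next
  case (Suc i) show ?case using Suc.IH[of "w - m p w"] by (simp only: g.simps(2))
qed

lemma g_sum: assumes "p \<ge> 2" shows "(\<Sum>i. of_nat (g p w i) :: ennreal) = of_nat w"
proof (induction w rule: less_induct)
  case (less w)
  show ?case
  proof (cases "w = 0")
    case True then show ?thesis by simp
  next
    case False
    then have lt: "w - m p w < w" using m_pos[OF assms, of w] by simp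
    have "(\<Sum>i. of_nat (g p w i) :: ennreal) = of_nat (m p w) + (\<Sum>i. of_nat (g p (w - m p w) i))"
      by (subst suminf_head_ennreal) simp
    also have "\<dots> = of_nat (m p w) + of_nat (w - m p w)" using less[OF lt] by simp
    also have "\<dots> = of_nat w" using m_le_w[OF assms, of w]
      by (simp flip: of_nat_add)
    finally show ?thesis .
  qed
qed

lemma h_sum: assumes "p \<ge> 2"
  shows "(\<Sum>i. of_nat (p ^ i * g p A i * g p B i) :: ennreal) = of_nat (h p A B)"
proof (induction A arbitrary: B rule: less_induct)
  case (less A)
  show ?case
  proof (cases "A = 0 \<or> B = 0")
    case True then show ?thesis by auto
  next
    case False
    then have lt: "A - m p A < A" using m_pos[OF assms, of A] by simp
    have "(\<Sum>i. of_nat (p ^ i * g p A i * g p B i) :: ennreal)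
      = of_nat (m p A * m p B) + (\<Sum>i. of_nat p * of_nat (p ^ i * g p (A - m p A) i * g p (B - m p B) i))"
      by (subst suminf_head_ennreal) (simp add: mult.assoc)
    also have "\<dots> = of_nat (m p A * m p B) + of_nat p * of_nat (h p (A - m p A) (B - m p B))"
      using less[OF lt] by (simp only: ennreal_suminf_cmult)
    also have "\<dots> = of_nat (h p A B)" using h_step[OF assms, of A B] False by simp
    finally show ?thesis .
  qed
qed

lemma res_first: assumes "p \<ge> 2" "integral_resolution p w \<delta>" shows "m p w \<le> \<delta> 0"
proof -
  have "(of_nat w :: ennreal) \<le> of_nat (S p (\<delta> 0))"
    using seq_bound[OF assms(1), of \<delta>] assms(2) unfolding integral_resolution_def by auto
  then show ?thesis by (intro m_le) simp
qed

lemma res_tail: assumes "p \<ge> 2" "integral_resolution p w \<delta>"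
  shows "integral_resolution p (w - \<delta> 0) (\<lambda>i. \<delta> (Suc i))" "\<delta> 0 \<le> w"
proof -
  have s: "of_nat w = (of_nat (\<delta> 0) :: ennreal) + (\<Sum>i. of_nat (\<delta> (Suc i)))"
    using assms(2) suminf_head_ennreal[of "\<lambda>i. of_nat (\<delta> i) :: ennreal"]
    unfolding integral_resolution_def by simp
  have "(of_nat (\<delta> 0) :: ennreal) \<le> of_nat (\<delta> 0) + (\<Sum>i. of_nat (\<delta> (Suc i)))" by simp
  then have le: "(of_nat (\<delta> 0) :: ennreal) \<le> of_nat w" using s by simp
  then show "\<delta> 0 \<le> w" by simp
  have "(\<Sum>i. of_nat (\<delta> (Suc i)) :: ennreal) = of_nat (w - \<delta> 0)"
  proof -
    have "(of_nat (\<delta> 0) :: ennreal) + of_nat (w - \<delta> 0) = of_nat w"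
      using \<open>\<delta> 0 \<le> w\<close> by (simp flip: of_nat_add)
    then have "(of_nat (\<delta> 0) :: ennreal) + (\<Sum>i. of_nat (\<delta> (Suc i))) = of_nat (\<delta> 0) + of_nat (w - \<delta> 0)"
      using s by simp
    then show ?thesis by (simp only: ennreal_add_left_cancel) simp
  qed
  then show "integral_resolution p (w - \<delta> 0) (\<lambda>i. \<delta> (Suc i))"
    using assms(2) unfolding integral_resolution_def by auto
qed



lemma g_is_res: "p \<ge> 2 \<Longrightarrow> integral_resolution p w (g p w)"
  unfolding integral_resolution_def using g_res g_sum by auto

lemma g_lexmin_k: assumes "p \<ge> 2"
  shows "integral_resolution p w \<delta> \<Longrightarrow> (\<forall>i<k. \<delta> i = g p w i) \<or> lex_less (g p w) \<delta>"
proof (induction k arbitrary: w \<delta>)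
  case 0 then show ?case by simp
next
  case (Suc k)
  have f: "m p w \<le> \<delta> 0" by (rule res_first[OF assms Suc.prems])
  show ?case
  proof (cases "m p w < \<delta> 0")
    case True
    then have "lex_less (g p w) \<delta>" unfolding lex_less_def by (intro exI[of _ 0]) simp
    then show ?thesis ..
  next
    case False
    then have e: "\<delta> 0 = m p w" using f by simp
    have r: "integral_resolution p (w - m p w) (\<lambda>i. \<delta> (Suc i))"
      using res_tail(1)[OF assms Suc.prems] e by simp
    from Suc.IH[OF r] show ?thesis
    proof
      assume H: "\<forall>i<k. \<delta> (Suc i) = g p (w - m p w) i"
      have "\<forall>i<Suc k. \<delta> i = g p w i"
      proof (intro allI impI)
        fix i assume "i < Suc k"
        then show "\<delta> i = g p w i" using H e by (cases i) auto
      qed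
      then show ?thesis ..
    next
      assume "lex_less (g p (w - m p w)) (\<lambda>i. \<delta> (Suc i))"
      then obtain j where j: "\<forall>i<j. g p (w - m p w) i = \<delta> (Suc i)" "g p (w - m p w) j < \<delta> (Suc j)"
        unfolding lex_less_def by blast
      have "\<forall>i<Suc j. g p w i = \<delta> i"
      proof (intro allI impI)
        fix i assume "i < Suc j"
        then show "g p w i = \<delta> i" using j e by (cases i) auto
      qed
      moreover have "g p w (Suc j) < \<delta> (Suc j)" using j by simp
      ultimately have "lex_less (g p w) \<delta>" unfolding lex_less_def by blast
      then show ?thesis ..
    qed
  qed
qed

lemma g_lexmin: assumes "p \<ge> 2" "integral_resolution p w \<delta>"
  shows "g p w = \<delta> \<or> lex_less (g p w) \<delta>"
proof (cases "lex_less (g p w) \<delta>")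
  case False
  have "\<delta> i = g p w i" for i using g_lexmin_k[OF assms, of "Suc i"] False by auto
  then show ?thesis by auto
qed simp

lemma lex_asym: "lex_less x y \<Longrightarrow> lex_less y x \<Longrightarrow> False"
proof -
  assume "lex_less x y" "lex_less y x"
  then obtain k1 k2 where a: "\<forall>i<k1. x i = y i" "x k1 < y k1" and b: "\<forall>i<k2. y i = x i" "y k2 < x k2"
    unfolding lex_less_def by blast
  show False
  proof (cases k1 k2 rule: linorder_cases)
    case less then show ?thesis using a b by force
  next
    case equal then show ?thesis using a b by simp
  next
    case greater then show ?thesis using a b by force
  qed
qed

lemma min_res: assumes "p \<ge> 2" shows "min_resolution p w = g p w"
  unfolding min_resolution_def
proof (rule the_equality)
  show "integral_resolution p w (g p w) \<and> (\<forall>\<delta>. integral_resolution p w \<delta> \<longrightarrow> g p w = \<delta> \<or> lex_less (g p w) \<delta>)"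
    using g_is_res[OF assms] g_lexmin[OF assms] by blast
next
  fix \<gamma> assume H: "integral_resolution p w \<gamma> \<and> (\<forall>\<delta>. integral_resolution p w \<delta> \<longrightarrow> \<gamma> = \<delta> \<or> lex_less \<gamma> \<delta>)"
  then have 1: "\<gamma> = g p w \<or> lex_less \<gamma> (g p w)" using g_is_res[OF assms] by blast
  have 2: "g p w = \<gamma> \<or> lex_less (g p w) \<gamma>" using g_lexmin[OF assms] H by blast
  show "\<gamma> = g p w" using 1 2 lex_asym by blast
qed



lemma children_sum: "(\<Sum>u\<in>tree_children p v. f u) = (\<Sum>x<p. f (x # v))"
proof -
  have "tree_children p v = (\<lambda>x. x # v) ` {..<p}" unfolding tree_children_def by auto
  moreover have "inj_on (\<lambda>x. x # v) {..<p}" by (auto simp: inj_on_def)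
  ultimately show ?thesis by (simp add: sum.reindex)
qed

lemma ennreal_sub_le: "of_nat \<omega> \<le> (of_nat c :: ennreal) + X \<Longrightarrow> of_nat (\<omega> - c) \<le> X"
proof (cases "c \<le> \<omega>")
  case True
  assume H: "of_nat \<omega> \<le> (of_nat c :: ennreal) + X"
  have "(of_nat \<omega> :: ennreal) = of_nat c + of_nat (\<omega> - c)" using True by (simp flip: of_nat_add)
  then have "(of_nat c :: ennreal) + of_nat (\<omega> - c) \<le> of_nat c + X" using H by simp
  then show ?thesis by (simp only: ennreal_add_left_cancel_le) simp
qed simp

lemma sub_weight: assumes "integral_weight_function p \<omega> a" "x < p"
  shows "integral_weight_function p (\<omega> - a []) (\<lambda>v. a (v @ [x]))"
  unfolding integral_weight_function_def
proof (intro conjI allI impI ballI)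
  fix T assume T: "root_path p T"
  define T' where "T' = (\<lambda>n. case n of 0 \<Rightarrow> [] | Suc n \<Rightarrow> T n @ [x])"
  have "root_path p T'"
    unfolding root_path_def
  proof (intro conjI allI)
    show "T' 0 = []" unfolding T'_def by simp
    fix n show "T' (Suc n) \<in> tree_children p (T' n)"
    proof (cases n)
      case 0 then show ?thesis using T assms(2) unfolding T'_def root_path_def tree_children_def by simp
    next
      case (Suc k)
      from T have "T (Suc k) \<in> tree_children p (T k)" unfolding root_path_def by blast
      then show ?thesis using Suc unfolding T'_def tree_children_def by auto
    qed
  qed
  then have "of_nat \<omega> \<le> (\<Sum>n. (of_nat (a (T' n)) :: ennreal))"
    using assms(1) unfolding integral_weight_function_def by blast
  also have "\<dots> = of_nat (a []) + (\<Sum>n. of_nat (a (T n @ [x])))"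
    by (subst suminf_head_ennreal) (simp add: T'_def)
  finally show "of_nat (\<omega> - a []) \<le> (\<Sum>n. (of_nat (a (T n @ [x])) :: ennreal))"
    by (rule ennreal_sub_le)
next
  fix v assume v: "v \<in> tree_vertices p"
  then have v': "v @ [x] \<in> tree_vertices p" using assms(2) unfolding tree_vertices_def by auto
  have "(\<Sum>u\<in>tree_children p v. a (u @ [x])) = (\<Sum>y<p. a (y # v @ [x]))" by (simp add: children_sum)
  also have "\<dots> = (\<Sum>u\<in>tree_children p (v @ [x]). a u)" by (simp add: children_sum)
  also have "\<dots> \<le> a (v @ [x])" using assms(1) v' unfolding integral_weight_function_def by blast
  finally show "(\<Sum>u\<in>tree_children p v. a (u @ [x])) \<le> a (v @ [x])" .
qed

lemma tree_decomp: "tree_vertices p = insert [] (\<Union>x\<in>{..<p}. (\<lambda>v. v @ [x]) ` tree_vertices p)"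
proof (intro equalityI subsetI)
  fix v assume v: "v \<in> tree_vertices p"
  show "v \<in> insert [] (\<Union>x\<in>{..<p}. (\<lambda>v. v @ [x]) ` tree_vertices p)"
  proof (cases v rule: rev_cases)
    case Nil then show ?thesis by simp
  next
    case (snoc ys y)
    then have "y < p" "ys \<in> tree_vertices p" using v unfolding tree_vertices_def by auto
    then show ?thesis using snoc by blast
  qed
next
  fix v assume "v \<in> insert [] (\<Union>x\<in>{..<p}. (\<lambda>v. v @ [x]) ` tree_vertices p)"
  then show "v \<in> tree_vertices p" unfolding tree_vertices_def by auto
qed

lemma scalar_decomp:
  "scalar_prod p a b = of_nat (a [] * b []) + (\<Sum>x<p. scalar_prod p (\<lambda>v. a (v @ [x])) (\<lambda>v. b (v @ [x])))"
proof -
  define f where "f = (\<lambda>v. (of_nat (a v * b v) :: ennreal))"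
  define B where "B = (\<lambda>x. (\<lambda>v. v @ [x]) ` tree_vertices p)"
  have sm: "f summable_on A" for A by (rule nonneg_summable_on_complete) simp
  have "scalar_prod p a b = infsum f (insert [] (\<Union>x\<in>{..<p}. B x))"
    unfolding scalar_prod_def f_def B_def by (subst tree_decomp) (rule refl)
  also have "\<dots> = f [] + infsum f (\<Union>x\<in>{..<p}. B x)"
    by (rule infsum_insert[OF sm]) (auto simp: B_def)
  also have "infsum f (\<Union>x\<in>{..<p}. B x) = (\<Sum>x<p. infsum f (B x))"
    by (rule sum_infsum[symmetric]) (auto simp: sm B_def)
  also have "\<dots> = (\<Sum>x<p. scalar_prod p (\<lambda>v. a (v @ [x])) (\<lambda>v. b (v @ [x])))"
  proof (rule sum.cong[OF refl])
    fix x
    have "infsum f (B x) = infsum (f \<circ> (\<lambda>v. v @ [x])) (tree_vertices p)"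
      unfolding B_def by (rule infsum_reindex) (simp add: inj_on_def)
    then show "infsum f (B x) = scalar_prod p (\<lambda>v. a (v @ [x])) (\<lambda>v. b (v @ [x]))"
      unfolding scalar_prod_def f_def by (simp add: comp_def)
  qed
  finally show ?thesis unfolding f_def by simp
qed

lemma min_child: assumes "p \<ge> 2" "integral_weight_function p \<omega> a" "v \<in> tree_vertices p"
  shows "\<exists>x<p. p * a (x # v) \<le> a v"
proof (rule ccontr)
  assume "\<not> ?thesis"
  then have H: "\<forall>x<p. a v < p * a (x # v)" by auto
  have "(\<Sum>x<p. a v) < (\<Sum>x<p. p * a (x # v))"
    by (rule sum_strict_mono) (use H assms(1) in \<open>auto simp: lessThan_empty_iff\<close>)
  then have "p * a v < p * (\<Sum>x<p. a (x # v))" by (simp add: sum_distrib_left)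
  moreover have "(\<Sum>x<p. a (x # v)) \<le> a v"
    using assms(2,3) children_sum[of a p v] unfolding integral_weight_function_def by auto
  ultimately show False by (meson mult_le_mono2 not_less)
qed

lemma root_bound: assumes "p \<ge> 2" "integral_weight_function p \<omega> a"
  shows "m p \<omega> \<le> a []"
proof -
  define nxt where "nxt = (\<lambda>v. SOME x. x < p \<and> p * a (x # v) \<le> a v)"
  define T where "T = rec_nat [] (\<lambda>_ v. nxt v # v)"
  have T0: "T 0 = []" and TS: "T (Suc n) = nxt (T n) # T n" for n unfolding T_def by simp_all
  have TV: "T n \<in> tree_vertices p \<and> nxt (T n) < p \<and> p * a (T (Suc n)) \<le> a (T n)" for n
  proof (induction n)
    case 0
    have "[] \<in> tree_vertices p" unfolding tree_vertices_def by simp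
    from someI_ex[OF min_child[OF assms this]] show ?case
      unfolding nxt_def T0 TS[of 0] using T0 \<open>[] \<in> tree_vertices p\<close> by simp
  next
    case (Suc n)
    then have v: "T (Suc n) \<in> tree_vertices p" unfolding TS tree_vertices_def by simp
    from someI_ex[OF min_child[OF assms v]] show ?case
      using v unfolding nxt_def TS[of "Suc n"] by simp
  qed
  have "root_path p T" unfolding root_path_def tree_children_def using T0 TS TV by auto
  then have "of_nat \<omega> \<le> (\<Sum>n. (of_nat (a (T n)) :: ennreal))"
    using assms(2) unfolding integral_weight_function_def by blast
  also have "\<dots> \<le> of_nat (S p (a (T 0)))"
    by (rule seq_bound[OF assms(1)]) (use TV in blast)
  finally have "\<omega> \<le> S p (a [])" using T0 by simp
  then show ?thesis by (rule m_le)
qed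



lemma main_ind: assumes "p \<ge> 2"
  shows "integral_weight_function p A a \<Longrightarrow> integral_weight_function p B b \<Longrightarrow>
    (of_nat (h p A B) :: ennreal) \<le> scalar_prod p a b"
proof (induction A arbitrary: B a b rule: less_induct)
  case (less A)
  show ?case
  proof (cases "A = 0 \<or> B = 0")
    case True then show ?thesis by auto
  next
    case False
    define c where "c = a []"
    define d where "d = b []"
    have mc: "m p A \<le> c" unfolding c_def by (rule root_bound[OF assms less.prems(1)])
    have md: "m p B \<le> d" unfolding d_def by (rule root_bound[OF assms less.prems(2)])
    have lt: "A - c < A" using mc m_pos[OF assms, of A] False by simp
    have IH: "(of_nat (h p (A - c) (B - d)) :: ennreal) \<le> scalar_prod p (\<lambda>v. a (v @ [x])) (\<lambda>v. b (v @ [x]))"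
      if "x < p" for x
      using less.IH[OF lt sub_weight[OF less.prems(1) that, folded c_def] sub_weight[OF less.prems(2) that, folded d_def]] .
    have "(of_nat (h p A B) :: ennreal) \<le> of_nat (c * d + p * h p (A - c) (B - d))"
      using lemI[OF assms mc md] by (simp only: of_nat_le_iff)
    also have "\<dots> = of_nat (c * d) + (\<Sum>x<p. (of_nat (h p (A - c) (B - d)) :: ennreal))"
      by simp
    also have "\<dots> \<le> of_nat (c * d) + (\<Sum>x<p. scalar_prod p (\<lambda>v. a (v @ [x])) (\<lambda>v. b (v @ [x])))"
      using IH by (intro add_left_mono sum_mono) simp
    also have "\<dots> = scalar_prod p a b" unfolding c_def d_def by (rule scalar_decomp[symmetric])
    finally show ?thesis .
  qed
qed

theorem mainTheorem5:
  fixes p \<omega>a \<omega>b :: nat and a b :: "nat list \<Rightarrow> nat"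
  assumes "p \<ge> 2"
    and "integral_weight_function p \<omega>a a"
    and "integral_weight_function p \<omega>b b"
  shows "scalar_prod p a b \<ge>
    (\<Sum>i. of_nat (p ^ i * min_resolution p \<omega>a i * min_resolution p \<omega>b i) :: ennreal)"
  using main_ind[OF assms] h_sum[OF assms(1)] min_res[OF assms(1)] by simp


end
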